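(* Let $\Omega=\{y\in\mathbb{R}^n: a_i^Ty\le b_i,\ i=1,\ldots,m\}$. There exists a constant $C>0$ depending only on $a_1,\ldots,a_m$ such that the following holds: for every $x\in\Omega$ and $\alpha>0$ for which the nearly-active index set $I(x,\alpha)$ has $q\le n$ elements and $\{a_i:i\in I(x,\alpha)\}$ are linearly independent, the set $\mathcal{D}$ constructed below is a $\Lambda$-positive spanning set for $B(x,\alpha)\cap\Omega$ with $\Lambda\le nC$. Construction: label the nearly-active constraints so that $I(x,\alpha)=\{1,\ldots,q\}$, let $A=[a_1\ \cdots\ a_q]\in\mathbb{R}^{n\times q}$, let $u_1,\ldots,u_n$ be an orthonormal set of left singular vectors of $A$ with $u_1,\ldots,u_q$ spanning $\operatorname{col}(A)$; for $i=1,\ldots,q$ let $\hat d_i:=-(A^\dagger)^Te_i$, $d_i:=\frac{\alpha}{\|\hat d_i\|}\hat d_i$, and let $\alpha_i$ be the largest value in $[0,1]$ with $x-\alpha_id_i\in\Omega$; and set $\mathcal{D}=\{d_1,\ldots,d_q\}\cup\{-\alpha_1d_1,\ldots,-\alpha_qd_q\}\cup\{\pm\alpha u_{q+1},\ldots,\pm\alpha u_n\}$.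
   Context: Nearly-active constraints: $I(x,\alpha):=\{i\in\{1,\ldots,m\}: b_i-\alpha\|a_i\|\le a_i^Tx\}$ (constraints whose boundary hyperplane is within distance $\alpha$ of $x$). $A^\dagger=(A^TA)^{-1}A^T$ is the Moore–Penrose pseudoinverse, $e_i\in\mathbb{R}^q$ the coordinate vectors, $B(y,r)=\{z:\|z-y\|\le r\}$. Given $x\in\Omega$, $\alpha>0$, $\Lambda\ge0$, a set $\{d_1,\ldots,d_p\}$ is a $\Lambda$-positive spanning set for $B(x,\alpha)\cap\Omega$ if $x+d_i\in\Omega$ for all $i$ and, for every $v\in\mathbb{R}^n$ with $x+v\in\Omega$ and $\|v\|\le\alpha$, there exists $c\in\mathbb{R}^p$ with $c\ge0$, $v=\sum_ic_id_i$ and $\|c\|_1\le\Lambda$. *)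

theory Defs
  imports "HOL-Analysis.Analysis"
begin

text \<open>Constraints are indexed by i < m (the paper's 1..m); vectors live in real^'n, n = CARD('n).\<close>

definition Omega :: "(nat \<Rightarrow> real^'n) \<Rightarrow> (nat \<Rightarrow> real) \<Rightarrow> nat \<Rightarrow> (real^'n) set" where
  "Omega a b m = {y. \<forall>i<m. a i \<bullet> y \<le> b i}"

definition nearly_active :: "(nat \<Rightarrow> real^'n) \<Rightarrow> (nat \<Rightarrow> real) \<Rightarrow> nat \<Rightarrow> real^'n \<Rightarrow> real \<Rightarrow> nat set" where
  "nearly_active a b m x \<alpha> = {i. i < m \<and> b i - \<alpha> * norm (a i) \<le> a i \<bullet> x}"

definition pos_spanning_set :: "(real^'n) set \<Rightarrow> real^'n \<Rightarrow> real \<Rightarrow> (real^'n) set \<Rightarrow> real \<Rightarrow> bool" where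
  "pos_spanning_set \<Omega> x \<alpha> D \<Lambda> \<longleftrightarrow>
     finite D \<and> (\<forall>d\<in>D. x + d \<in> \<Omega>) \<and>
     (\<forall>v. x + v \<in> \<Omega> \<and> norm v \<le> \<alpha> \<longrightarrow>
        (\<exists>c. (\<forall>d\<in>D. c d \<ge> 0) \<and> v = (\<Sum>d\<in>D. c d *\<^sub>R d) \<and> (\<Sum>d\<in>D. c d) \<le> \<Lambda>))"

text \<open>With A the matrix whose columns are a_j (j in I), this is the inverse of the
  Gram matrix A^T A, with rows/columns indexed by I (zero outside I).\<close>
definition gram_inv :: "(nat \<Rightarrow> real^'n) \<Rightarrow> nat set \<Rightarrow> nat \<Rightarrow> nat \<Rightarrow> real" where
  "gram_inv a I = (THE M. (\<forall>j\<in>I. \<forall>k\<in>I. (\<Sum>l\<in>I. (a j \<bullet> a l) * M l k) = (if j = k then 1 else 0))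
                         \<and> (\<forall>j k. j \<notin> I \<or> k \<notin> I \<longrightarrow> M j k = 0))"

text \<open>(A^dagger)^T e_i = A (A^T A)^{-1} e_i, with A^dagger = (A^T A)^{-1} A^T.\<close>
definition pinvT_col :: "(nat \<Rightarrow> real^'n) \<Rightarrow> nat set \<Rightarrow> nat \<Rightarrow> real^'n" where
  "pinvT_col a I i = (\<Sum>j\<in>I. gram_inv a I j i *\<^sub>R a j)"

definition dhat :: "(nat \<Rightarrow> real^'n) \<Rightarrow> nat set \<Rightarrow> nat \<Rightarrow> real^'n" where
  "dhat a I i = - pinvT_col a I i"

definition dir :: "(nat \<Rightarrow> real^'n) \<Rightarrow> nat set \<Rightarrow> real \<Rightarrow> nat \<Rightarrow> real^'n" where
  "dir a I \<alpha> i = (\<alpha> / norm (dhat a I i)) *\<^sub>R dhat a I i"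

definition step_len :: "(real^'n) set \<Rightarrow> real^'n \<Rightarrow> real^'n \<Rightarrow> real" where
  "step_len \<Omega> x d = (GREATEST t. 0 \<le> t \<and> t \<le> 1 \<and> x - t *\<^sub>R d \<in> \<Omega>)"

text \<open>u 0, ..., u (n-1) (the paper's u_1..u_n) form an orthonormal set of left singular
  vectors of A (eigenvectors of A A^T, where A A^T v = sum over j in I of (a_j . v) a_j),
  and the first q = card I of them span col(A).\<close>
definition left_singular_basis :: "(nat \<Rightarrow> real^'n) \<Rightarrow> nat set \<Rightarrow> (nat \<Rightarrow> real^'n) \<Rightarrow> bool" where
  "left_singular_basis a I u \<longleftrightarrow>
     (\<forall>i<CARD('n). \<forall>j<CARD('n). u i \<bullet> u j = (if i = j then 1 else 0)) \<and>
     (\<forall>i<CARD('n). \<exists>\<sigma>. (\<Sum>j\<in>I. (a j \<bullet> u i) *\<^sub>R a j) = \<sigma> *\<^sub>R u i) \<and>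
     span (u ` {..<card I}) = span (a ` I)"

definition Dset :: "(nat \<Rightarrow> real^'n) \<Rightarrow> (nat \<Rightarrow> real) \<Rightarrow> nat \<Rightarrow> real^'n \<Rightarrow> real \<Rightarrow> (nat \<Rightarrow> real^'n) \<Rightarrow> (real^'n) set" where
  "Dset a b m x \<alpha> u =
     (let I = nearly_active a b m x \<alpha>; q = card I in
        (\<lambda>i. dir a I \<alpha> i) ` I
      \<union> (\<lambda>i. - (step_len (Omega a b m) x (dir a I \<alpha> i) *\<^sub>R dir a I \<alpha> i)) ` I
      \<union> (\<lambda>i. \<alpha> *\<^sub>R u i) ` {q..<CARD('n)}
      \<union> (\<lambda>i. - (\<alpha> *\<^sub>R u i)) ` {q..<CARD('n)})"

end

theory Submission imports Defs begin

lemma span_idx: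
  fixes a :: "nat \<Rightarrow> real^'n"
  assumes "finite I" "inj_on a I" "y \<in> span (a ` I)"
  shows "\<exists>c. y = (\<Sum>j\<in>I. c j *\<^sub>R a j)"
proof -
  obtain c where "y = (\<Sum>w\<in>a ` I. c w *\<^sub>R w)"
    using assms(3) span_finite[of "a ` I"] assms(1) by auto
  also have "\<dots> = (\<Sum>j\<in>I. c (a j) *\<^sub>R a j)"
    using sum.reindex[OF assms(2)] by (simp add: comp_def)
  finally have eq: "y = (\<Sum>j\<in>I. c (a j) *\<^sub>R a j)" .
  show ?thesis by (rule exI[where x="\<lambda>j. c (a j)"]) (use eq in simp)
qed

lemma indep_idx:
  fixes a :: "nat \<Rightarrow> real^'n"
  assumes "finite I" "inj_on a I" "independent (a ` I)" "(\<Sum>j\<in>I. c j *\<^sub>R a j) = 0" "j \<in> I"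
  shows "c j = 0"
proof -
  let ?d = "\<lambda>w. c (inv_into I a w)"
  have "(\<Sum>w\<in>a ` I. ?d w *\<^sub>R w) = (\<Sum>j\<in>I. c j *\<^sub>R a j)"
    using sum.reindex[OF assms(2), of "\<lambda>w. ?d w *\<^sub>R w"] assms(2)
    by (simp add: comp_def inv_into_f_f cong: sum.cong)
  then have "(\<Sum>w\<in>a ` I. ?d w *\<^sub>R w) = 0" using assms(4) by simp
  moreover have H: "\<forall>c. (\<Sum>v\<in>a ` I. c v *\<^sub>R v) = 0 \<longrightarrow> (\<forall>v\<in>a ` I. c v = 0)"
    using assms(3) unfolding independent_explicit by blast
  ultimately have "\<forall>w\<in>a ` I. ?d w = 0" using spec[OF H, of ?d] by blast
  then have "?d (a j) = 0" using assms(5) by blast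
  then show ?thesis using assms(2,5) by (simp add: inv_into_f_f)
qed

lemma orth_span_zero:
  fixes y :: "real^'n"
  assumes "y \<in> span S" "\<And>s. s \<in> S \<Longrightarrow> s \<bullet> y = 0"
  shows "y = 0"
proof -
  have "orthogonal y y"
    by (rule orthogonal_to_span[OF assms(1)]) (simp add: orthogonal_def assms(2) inner_commute)
  then show ?thesis by (simp add: orthogonal_self)
qed

definition GP :: "(nat \<Rightarrow> real^'n) \<Rightarrow> nat set \<Rightarrow> (nat \<Rightarrow> nat \<Rightarrow> real) \<Rightarrow> bool" where
  "GP a I M \<longleftrightarrow> (\<forall>j\<in>I. \<forall>k\<in>I. (\<Sum>l\<in>I. (a j \<bullet> a l) * M l k) = (if j = k then 1 else 0))
                         \<and> (\<forall>j k. j \<notin> I \<or> k \<notin> I \<longrightarrow> M j k = 0)"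

lemma dual_vec_exists:
  fixes a :: "nat \<Rightarrow> real^'n"
  assumes "finite I" "inj_on a I" "independent (a ` I)" "k \<in> I"
  shows "\<exists>e. e \<in> span (a ` I) \<and> (\<forall>j\<in>I. a j \<bullet> e = (if j = k then 1 else 0))"
proof -
  let ?S = "a ` (I - {k})"
  obtain y z where y: "y \<in> span ?S" and z: "\<And>w. w \<in> span ?S \<Longrightarrow> orthogonal z w"
    and ak: "a k = y + z"
    using orthogonal_subspace_decomp_exists[of ?S "a k"] by blast
  have Seq: "?S = a ` I - {a k}" using assms(2,4) by (auto simp: inj_on_def)
  have "z \<noteq> 0"
  proof
    assume "z = 0"
    then have "a k \<in> span (a ` I - {a k})" using ak y Seq by simp
    then have "dependent (a ` I)" unfolding dependent_def using assms(4) by blast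
    then show False using assms(3) by blast
  qed
  then have zz: "z \<bullet> z > 0" by simp
  have yz: "y \<bullet> z = 0" using z[OF y] by (simp add: orthogonal_def inner_commute)
  define e where "e = (1 / (z \<bullet> z)) *\<^sub>R z"
  have "e \<in> span (a ` I)"
  proof -
    have "span ?S \<subseteq> span (a ` I)" by (rule span_mono) auto
    then have "y \<in> span (a ` I)" using y by blast
    moreover have "a k \<in> span (a ` I)" using assms(4) by (simp add: span_base)
    ultimately have "z \<in> span (a ` I)" using ak span_diff by (metis add_diff_cancel_left')
    then show ?thesis unfolding e_def by (rule span_scale)
  qed
  moreover have "\<forall>j\<in>I. a j \<bullet> e = (if j = k then 1 else 0)"
  proof
    fix j assume j: "j \<in> I"
    show "a j \<bullet> e = (if j = k then 1 else 0)"
    proof (cases "j = k")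
      case True
      then show ?thesis using ak yz zz by (simp add: e_def inner_add_left)
    next
      case False
      then have "a j \<in> span ?S" using j by (simp add: span_base)
      then have "z \<bullet> a j = 0" using z by (simp add: orthogonal_def)
      then show ?thesis using False by (simp add: e_def inner_commute)
    qed
  qed
  ultimately show ?thesis by blast
qed

lemma GP_exists:
  fixes a :: "nat \<Rightarrow> real^'n"
  assumes "finite I" "inj_on a I" "independent (a ` I)"
  shows "\<exists>M. GP a I M"
proof -
  have "\<forall>k\<in>I. \<exists>c. \<forall>j\<in>I. a j \<bullet> (\<Sum>l\<in>I. c l *\<^sub>R a l) = (if j = k then 1 else 0)"
  proof
    fix k assume k: "k \<in> I"
    obtain e where e: "e \<in> span (a ` I)" "\<forall>j\<in>I. a j \<bullet> e = (if j = k then 1 else 0)"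
      using dual_vec_exists[OF assms k] by blast
    obtain c where "e = (\<Sum>l\<in>I. c l *\<^sub>R a l)" using span_idx[OF assms(1,2) e(1)] by blast
    then show "\<exists>c. \<forall>j\<in>I. a j \<bullet> (\<Sum>l\<in>I. c l *\<^sub>R a l) = (if j = k then 1 else 0)"
      using e(2) by blast
  qed
  then obtain cc where cc: "\<forall>k\<in>I. \<forall>j\<in>I. a j \<bullet> (\<Sum>l\<in>I. cc k l *\<^sub>R a l) = (if j = k then 1 else 0)"
    by metis
  define M where "M = (\<lambda>l k. if l \<in> I \<and> k \<in> I then cc k l else 0)"
  have "GP a I M"
    unfolding GP_def
  proof (intro conjI ballI allI impI)
    fix j k assume j: "j \<in> I" and k: "k \<in> I"
    have "(\<Sum>l\<in>I. (a j \<bullet> a l) * M l k) = (\<Sum>l\<in>I. (a j \<bullet> a l) * cc k l)"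
      using k by (simp add: M_def)
    also have "\<dots> = a j \<bullet> (\<Sum>l\<in>I. cc k l *\<^sub>R a l)"
      by (simp add: inner_sum_right mult.commute)
    also have "\<dots> = (if j = k then 1 else 0)" using cc j k by blast
    finally show "(\<Sum>l\<in>I. (a j \<bullet> a l) * M l k) = (if j = k then 1 else 0)" .
  next
    fix j k :: nat assume "j \<notin> I \<or> k \<notin> I"
    then show "M j k = 0" by (auto simp: M_def)
  qed
  then show ?thesis by blast
qed

lemma GP_unique:
  fixes a :: "nat \<Rightarrow> real^'n"
  assumes "finite I" "inj_on a I" "independent (a ` I)" "GP a I M" "GP a I M'"
  shows "M = M'"
proof (intro ext)
  fix l k
  show "M l k = M' l k"
  proof (cases "l \<in> I \<and> k \<in> I")
    case False
    then show ?thesis using assms(4,5) unfolding GP_def by force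
  next
    case True
    define y where "y = (\<Sum>l\<in>I. (M l k - M' l k) *\<^sub>R a l)"
    have "y \<in> span (a ` I)" unfolding y_def
      by (intro span_sum span_scale) (simp add: span_base)
    moreover have "\<And>s. s \<in> a ` I \<Longrightarrow> s \<bullet> y = 0"
    proof -
      fix s assume "s \<in> a ` I"
      then obtain j where j: "j \<in> I" "s = a j" by blast
      have "s \<bullet> y = (\<Sum>l\<in>I. (a j \<bullet> a l) * M l k) - (\<Sum>l\<in>I. (a j \<bullet> a l) * M' l k)"
        by (simp add: y_def j inner_sum_right algebra_simps sum_subtractf)
      also have "\<dots> = 0" using assms(4,5) j True unfolding GP_def by simp
      finally show "s \<bullet> y = 0" .
    qed
    ultimately have "y = 0" by (rule orth_span_zero)
    then show ?thesis using indep_idx[OF assms(1,2,3), of "\<lambda>l. M l k - M' l k" l] True y_def by simp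
  qed
qed

lemma gram_inv_GP:
  fixes a :: "nat \<Rightarrow> real^'n"
  assumes "finite I" "inj_on a I" "independent (a ` I)"
  shows "GP a I (gram_inv a I)"
proof -
  have "\<exists>!M. GP a I M" using GP_exists[OF assms] GP_unique[OF assms] by blast
  then show ?thesis unfolding gram_inv_def GP_def[symmetric] by (rule theI')
qed

lemma dhat_inner:
  fixes a :: "nat \<Rightarrow> real^'n"
  assumes "finite I" "inj_on a I" "independent (a ` I)" "i \<in> I" "j \<in> I"
  shows "a j \<bullet> dhat a I i = (if j = i then -1 else 0)"
proof -
  have G: "GP a I (gram_inv a I)" by (rule gram_inv_GP[OF assms(1-3)])
  have "a j \<bullet> dhat a I i = - (\<Sum>l\<in>I. (a j \<bullet> a l) * gram_inv a I l i)"
    by (simp add: dhat_def pinvT_col_def inner_sum_right mult.commute)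
  also have "\<dots> = (if j = i then -1 else 0)" using G assms(4,5) unfolding GP_def by simp
  finally show ?thesis .
qed

lemma dhat_span:
  fixes a :: "nat \<Rightarrow> real^'n"
  shows "dhat a I i \<in> span (a ` I)"
  unfolding dhat_def pinvT_col_def
  by (intro span_neg span_sum span_scale) (simp add: span_base)

lemma dhat_nz:
  fixes a :: "nat \<Rightarrow> real^'n"
  assumes "finite I" "inj_on a I" "independent (a ` I)" "i \<in> I"
  shows "dhat a I i \<noteq> 0"
  using dhat_inner[OF assms assms(4)] by auto

lemma span_repr:
  fixes a :: "nat \<Rightarrow> real^'n"
  assumes "finite I" "inj_on a I" "independent (a ` I)" "w \<in> span (a ` I)"
  shows "w = - (\<Sum>i\<in>I. (a i \<bullet> w) *\<^sub>R dhat a I i)"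
proof -
  define r where "r = w + (\<Sum>i\<in>I. (a i \<bullet> w) *\<^sub>R dhat a I i)"
  have "r \<in> span (a ` I)" unfolding r_def
    by (intro span_add assms(4) span_sum span_scale dhat_span)
  moreover have "\<And>s. s \<in> a ` I \<Longrightarrow> s \<bullet> r = 0"
  proof -
    fix s assume "s \<in> a ` I"
    then obtain j where j: "j \<in> I" "s = a j" by blast
    have "s \<bullet> r = a j \<bullet> w + (\<Sum>i\<in>I. (a i \<bullet> w) * (a j \<bullet> dhat a I i))"
      by (simp add: r_def j inner_add_right inner_sum_right)
    also have "\<dots> = a j \<bullet> w + (\<Sum>i\<in>I. (if j = i then - (a i \<bullet> w) else 0))"
      using dhat_inner[OF assms(1-3) _ j(1)] by (intro arg_cong2[where f="(+)"] refl sum.cong) auto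
    also have "\<dots> = 0" using j(1) assms(1) by (simp add: sum.delta)
    finally show "s \<bullet> r = 0" .
  qed
  ultimately have "r = 0" by (rule orth_span_zero)
  then show ?thesis unfolding r_def by (simp add: eq_neg_iff_add_eq_0)
qed

lemma onb_expand:
  fixes u :: "nat \<Rightarrow> real^'n"
  assumes on: "\<forall>i<CARD('n). \<forall>j<CARD('n). u i \<bullet> u j = (if i = j then 1 else 0)"
  shows "v = (\<Sum>k<CARD('n). (u k \<bullet> v) *\<^sub>R u k)"
proof -
  let ?n = "CARD('n)"
  have inj: "inj_on u {..<?n}"
  proof (rule inj_onI)
    fix i j assume "i \<in> {..<?n}" "j \<in> {..<?n}" "u i = u j"
    then have "u i \<bullet> u j = 1" using on by (metis lessThan_iff)
    then show "i = j" using on \<open>i \<in> _\<close> \<open>j \<in> _\<close> by (metis lessThan_iff zero_neq_one)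
  qed
  have po: "pairwise orthogonal (u ` {..<?n})"
    unfolding pairwise_def orthogonal_def using on by auto
  have nz: "0 \<notin> u ` {..<?n}" using on by force
  have ind: "independent (u ` {..<?n})" by (rule pairwise_orthogonal_independent[OF po nz])
  have "card (u ` {..<?n}) = ?n" using card_image[OF inj] by simp
  then have "UNIV \<subseteq> span (u ` {..<?n})"
    by (intro card_ge_dim_independent[OF _ ind]) auto
  define r where "r = v - (\<Sum>k<?n. (u k \<bullet> v) *\<^sub>R u k)"
  have "r \<in> span (u ` {..<?n})" using \<open>UNIV \<subseteq> _\<close> by blast
  moreover have "\<And>s. s \<in> u ` {..<?n} \<Longrightarrow> s \<bullet> r = 0"
  proof -
    fix s assume "s \<in> u ` {..<?n}"
    then obtain j where j: "j < ?n" "s = u j" by blast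
    have "s \<bullet> r = u j \<bullet> v - (\<Sum>k<?n. (u k \<bullet> v) * (u j \<bullet> u k))"
      by (simp add: r_def j inner_diff_right inner_sum_right)
    also have "\<dots> = u j \<bullet> v - (\<Sum>k<?n. (if j = k then u k \<bullet> v else 0))"
      using on j(1) by (intro arg_cong2[where f="(-)"] refl sum.cong) auto
    also have "\<dots> = 0" using j(1) by (simp add: sum.delta)
    finally show "s \<bullet> r = 0" .
  qed
  ultimately have "r = 0" by (rule orth_span_zero)
  then show ?thesis unfolding r_def by simp
qed

definition bcone :: "(real^'n) set \<Rightarrow> real \<Rightarrow> real^'n \<Rightarrow> bool" where
  "bcone D L v \<longleftrightarrow> (\<exists>c. (\<forall>d\<in>D. c d \<ge> 0) \<and> v = (\<Sum>d\<in>D. c d *\<^sub>R d) \<and> (\<Sum>d\<in>D. c d) \<le> L)"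

lemma bcone_single: "finite D \<Longrightarrow> d \<in> D \<Longrightarrow> t \<ge> 0 \<Longrightarrow> t \<le> L \<Longrightarrow> bcone D L (t *\<^sub>R d)"
  unfolding bcone_def
  by (rule exI[where x="\<lambda>e. if e = d then t else 0"])
     (simp add: if_distrib[of "\<lambda>x. x *\<^sub>R _"] sum.delta' cong: if_cong)

lemma bcone_add: "bcone D L1 v \<Longrightarrow> bcone D L2 w \<Longrightarrow> bcone D (L1 + L2) (v + w)"
  unfolding bcone_def
proof (elim exE conjE)
  fix c1 c2
  assume "\<forall>d\<in>D. 0 \<le> c1 d" "v = (\<Sum>d\<in>D. c1 d *\<^sub>R d)" "sum c1 D \<le> L1"
    "\<forall>d\<in>D. 0 \<le> c2 d" "w = (\<Sum>d\<in>D. c2 d *\<^sub>R d)" "sum c2 D \<le> L2"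
  then show "\<exists>c. (\<forall>d\<in>D. 0 \<le> c d) \<and> v + w = (\<Sum>d\<in>D. c d *\<^sub>R d) \<and> sum c D \<le> L1 + L2"
    by (intro exI[where x="\<lambda>d. c1 d + c2 d"]) (simp add: sum.distrib scaleR_add_left)
qed

lemma bcone_zero: "bcone D 0 0"
  unfolding bcone_def by (rule exI[where x="\<lambda>_. 0"]) simp

lemma bcone_mono: "bcone D L v \<Longrightarrow> L \<le> L' \<Longrightarrow> bcone D L' v"
  unfolding bcone_def by force

lemma bcone_sum: "finite K \<Longrightarrow> (\<And>k. k \<in> K \<Longrightarrow> bcone D (L k) (f k)) \<Longrightarrow> bcone D (sum L K) (sum f K)"
proof (induction K rule: finite_induct)
  case empty
  then show ?case by (simp add: bcone_zero)
next
  case (insert x F)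
  then show ?case by (simp add: bcone_add)
qed

lemma feasible:
  fixes a :: "nat \<Rightarrow> real^'n"
  assumes "\<forall>j<m. j \<notin> nearly_active a b m x \<alpha> \<longrightarrow> a j \<bullet> x < b j - \<alpha> * norm (a j)"
    and "norm e \<le> \<alpha>" and "\<forall>j\<in>nearly_active a b m x \<alpha>. a j \<bullet> (x + e) \<le> b j"
  shows "x + e \<in> Omega a b m"
  unfolding Omega_def
proof (intro CollectI allI impI)
  fix j assume j: "j < m"
  show "a j \<bullet> (x + e) \<le> b j"
  proof (cases "j \<in> nearly_active a b m x \<alpha>")
    case True then show ?thesis using assms(3) by blast
  next
    case False
    have "a j \<bullet> e \<le> norm (a j) * norm e" by (rule norm_cauchy_schwarz)
    also have "\<dots> \<le> norm (a j) * \<alpha>" using assms(2) by (simp add: mult_left_mono)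
    moreover have "a j \<bullet> x < b j - \<alpha> * norm (a j)" using assms(1) j False by blast
    ultimately show ?thesis by (simp add: inner_add_right algebra_simps)
  qed
qed

theorem corollary5p9:
  fixes a :: "nat \<Rightarrow> real^'n" and m :: nat
  shows "\<exists>C>0. \<forall>(b :: nat \<Rightarrow> real) (x :: real^'n) (\<alpha> :: real) (u :: nat \<Rightarrow> real^'n).
           x \<in> Omega a b m \<longrightarrow> \<alpha> > 0 \<longrightarrow>
           card (nearly_active a b m x \<alpha>) \<le> CARD('n) \<longrightarrow>
           inj_on a (nearly_active a b m x \<alpha>) \<longrightarrow>
           independent (a ` nearly_active a b m x \<alpha>) \<longrightarrow>
           left_singular_basis a (nearly_active a b m x \<alpha>) u \<longrightarrow>
           (\<exists>\<Lambda>. \<Lambda> \<le> real CARD('n) * C \<and>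
                 pos_spanning_set (Omega a b m) x \<alpha> (Dset a b m x \<alpha> u) \<Lambda>)"
proof -
  define C where "C = 1 + (\<Sum>J\<in>Pow {..<m}. \<Sum>i\<in>J. norm (a i) * norm (dhat a J i))"
  have C1: "C \<ge> 1" unfolding C_def by (simp add: sum_nonneg)
  have CK: "norm (a i) * norm (dhat a J i) \<le> C" if "J \<subseteq> {..<m}" "i \<in> J" for J i
  proof -
    have fJ: "finite J" using that(1) finite_subset by blast
    have "norm (a i) * norm (dhat a J i) \<le> (\<Sum>i\<in>J. norm (a i) * norm (dhat a J i))"
      by (rule member_le_sum[OF that(2)]) (simp_all add: fJ)
    also have "\<dots> \<le> (\<Sum>J\<in>Pow {..<m}. \<Sum>i\<in>J. norm (a i) * norm (dhat a J i))"
      by (rule member_le_sum[where f="\<lambda>J. \<Sum>i\<in>J. norm (a i) * norm (dhat a J i)"])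
         (use that(1) in \<open>simp_all add: sum_nonneg\<close>)
    finally show ?thesis unfolding C_def by simp
  qed
  show ?thesis
  proof (rule exI[of _ C], intro conjI allI impI)
    show "C > 0" using C1 by simp
  next
    fix b x \<alpha> u
    assume xO: "x \<in> Omega a b m" and apos: "\<alpha> > 0"
      and cardI: "card (nearly_active a b m x \<alpha>) \<le> CARD('n)"
      and inj: "inj_on a (nearly_active a b m x \<alpha>)"
      and ind: "independent (a ` nearly_active a b m x \<alpha>)"
      and lsb: "left_singular_basis a (nearly_active a b m x \<alpha>) u"
    define I where "I = nearly_active a b m x \<alpha>"
    define q where "q = card I"
    define n where "n = CARD('n)"
    define \<Omega> where "\<Omega> = Omega a b m"
    have Im: "I \<subseteq> {..<m}" unfolding I_def nearly_active_def by auto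
    have fI: "finite I" using Im finite_subset by blast
    have qn: "q \<le> n" using cardI unfolding q_def n_def I_def .
    note inj = inj[folded I_def] and ind = ind[folded I_def]
    have far: "\<forall>j<m. j \<notin> nearly_active a b m x \<alpha> \<longrightarrow> a j \<bullet> x < b j - \<alpha> * norm (a j)"
      unfolding nearly_active_def by auto
    have xb: "a j \<bullet> x \<le> b j" if "j < m" for j using xO that unfolding Omega_def by auto
    have feas: "x + e \<in> \<Omega>" if "norm e \<le> \<alpha>" "\<forall>j\<in>I. a j \<bullet> (x + e) \<le> b j" for e
      unfolding \<Omega>_def by (rule feasible[OF far that(1)]) (use that(2) in \<open>simp add: I_def\<close>)
    have on: "\<forall>i<n. \<forall>j<n. u i \<bullet> u j = (if i = j then 1 else 0)"
      and spu: "span (u ` {..<q}) = span (a ` I)"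
      using lsb unfolding left_singular_basis_def I_def q_def n_def by auto
    have nu: "norm (u k) = 1" if "k < n" for k
      using on that by (simp add: norm_eq_sqrt_inner)
    have auz: "a j \<bullet> u k = 0" if "j \<in> I" "q \<le> k" "k < n" for j k
    proof -
      have "a j \<in> span (u ` {..<q})" using spu that(1) by (simp add: span_base)
      moreover have "orthogonal (u k) y" if "y \<in> u ` {..<q}" for y
        using that on \<open>q \<le> k\<close> \<open>k < n\<close> qn unfolding orthogonal_def by auto
      ultimately have "orthogonal (u k) (a j)" by (rule orthogonal_to_span)
      then show ?thesis by (simp add: orthogonal_def inner_commute)
    qed
    define nd where "nd i = norm (dhat a I i)" for i
    have ndpos: "nd i > 0" if "i \<in> I" for i
      using dhat_nz[OF fI inj ind that] unfolding nd_def by simp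
    define d where "d i = dir a I \<alpha> i" for i
    have d_eq: "d i = (\<alpha> / nd i) *\<^sub>R dhat a I i" for i unfolding d_def dir_def nd_def by simp
    have nd_d: "norm (d i) = \<alpha>" if "i \<in> I" for i
      using ndpos[OF that] apos unfolding d_eq by (simp add: nd_def)
    have ad: "a j \<bullet> d i = (if j = i then - \<alpha> / nd i else 0)" if "i \<in> I" "j \<in> I" for i j
      unfolding d_eq using dhat_inner[OF fI inj ind that] by simp
    define s where "s i = b i - a i \<bullet> x" for i
    have s0: "s i \<ge> 0" if "i \<in> I" for i using xb that Im unfolding s_def by auto
    define t0 where "t0 i = min 1 (s i * nd i / \<alpha>)" for i
    have t00: "0 \<le> t0 i" if i: "i \<in> I" for i unfolding t0_def using s0[OF i] ndpos[OF i] apos by simp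
    have t01: "t0 i \<le> 1" for i unfolding t0_def by simp
    have tfeas: "x - t0 i *\<^sub>R d i \<in> \<Omega>" if i: "i \<in> I" for i
    proof -
      have "x + (- (t0 i *\<^sub>R d i)) \<in> \<Omega>"
      proof (rule feas)
        show "norm (- (t0 i *\<^sub>R d i)) \<le> \<alpha>" using nd_d[OF i] t00[OF i] t01 apos
          by (simp add: mult_left_le_one_le)
        show "\<forall>j\<in>I. a j \<bullet> (x + - (t0 i *\<^sub>R d i)) \<le> b j"
        proof
          fix j assume j: "j \<in> I"
          show "a j \<bullet> (x + - (t0 i *\<^sub>R d i)) \<le> b j"
          proof (cases "j = i")
            case False then show ?thesis using ad[OF i j] xb j Im by (auto simp: inner_diff_right)
          next
            case True
            have "t0 i * (\<alpha> / nd i) \<le> (s i * nd i / \<alpha>) * (\<alpha> / nd i)"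
              by (rule mult_right_mono) (use apos ndpos[OF i] in \<open>simp_all add: t0_def\<close>)
            also have "\<dots> = s i" using apos ndpos[OF i] by (simp add: field_simps)
            finally show ?thesis using True ad[OF i i] by (simp add: inner_diff_right s_def)
          qed
        qed
      qed
      then show ?thesis by simp
    qed
    have step: "step_len \<Omega> x (d i) = t0 i" if i: "i \<in> I" for i
      unfolding step_len_def
    proof (rule Greatest_equality)
      show "0 \<le> t0 i \<and> t0 i \<le> 1 \<and> x - t0 i *\<^sub>R d i \<in> \<Omega>" using t00[OF i] t01 tfeas[OF i] by simp
    next
      fix y assume y: "0 \<le> y \<and> y \<le> 1 \<and> x - y *\<^sub>R d i \<in> \<Omega>"
      then have "a i \<bullet> (x - y *\<^sub>R d i) \<le> b i" using i Im unfolding \<Omega>_def Omega_def by auto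
      then have "y * (\<alpha> / nd i) \<le> s i" using ad[OF i i] by (simp add: inner_diff_right s_def)
      then have "y \<le> s i * nd i / \<alpha>" using apos ndpos[OF i] by (simp add: field_simps)
      then show "y \<le> t0 i" using y unfolding t0_def by simp
    qed
    define D where "D = Dset a b m x \<alpha> u"
    have D_eq: "D = d ` I \<union> (\<lambda>i. - (step_len \<Omega> x (d i) *\<^sub>R d i)) ` I
        \<union> (\<lambda>i. \<alpha> *\<^sub>R u i) ` {q..<n} \<union> (\<lambda>i. - (\<alpha> *\<^sub>R u i)) ` {q..<n}"
      by (simp add: D_def Dset_def Let_def I_def q_def n_def d_def \<Omega>_def)
    have fD: "finite D" unfolding D_eq using fI by simp
    have D1: "d i \<in> D" if "i \<in> I" for i unfolding D_eq using that by blast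
    have D2: "- (t0 i *\<^sub>R d i) \<in> D" if "i \<in> I" for i unfolding D_eq using that step[OF that] by force
    have D3: "\<alpha> *\<^sub>R u k \<in> D" "- (\<alpha> *\<^sub>R u k) \<in> D" if "k \<in> {q..<n}" for k
      unfolding D_eq using that by blast+
    have inD: "x + e \<in> \<Omega>" if "e \<in> D" for e
    proof -
      have "e \<in> d ` I \<or> e \<in> (\<lambda>i. - (t0 i *\<^sub>R d i)) ` I \<or> e \<in> (\<lambda>i. \<alpha> *\<^sub>R u i) ` {q..<n}
         \<or> e \<in> (\<lambda>i. - (\<alpha> *\<^sub>R u i)) ` {q..<n}"
        using that step unfolding D_eq by auto
      then show ?thesis
      proof (elim disjE imageE)
        fix i assume i: "i \<in> I" and e: "e = d i"
        show ?thesis unfolding e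
        proof (rule feas)
          show "norm (d i) \<le> \<alpha>" using nd_d[OF i] by simp
          show "\<forall>j\<in>I. a j \<bullet> (x + d i) \<le> b j"
          proof
            fix j assume j: "j \<in> I"
            have "a j \<bullet> d i \<le> 0" using ad[OF i j] apos ndpos[OF i] by simp
            moreover have "a j \<bullet> x \<le> b j" using xb j Im by auto
            ultimately show "a j \<bullet> (x + d i) \<le> b j" by (simp add: inner_add_right)
          qed
        qed
      next
        fix i assume i: "i \<in> I" and e: "e = - (t0 i *\<^sub>R d i)"
        show ?thesis using tfeas[OF i] e by simp
      next
        fix k assume k: "k \<in> {q..<n}" and e: "e = \<alpha> *\<^sub>R u k"
        show ?thesis unfolding e
        proof (rule feas)
          show "norm (\<alpha> *\<^sub>R u k) \<le> \<alpha>" using nu k apos by simp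
          show "\<forall>j\<in>I. a j \<bullet> (x + \<alpha> *\<^sub>R u k) \<le> b j"
            using auz k xb Im by (auto simp: inner_add_right)
        qed
      next
        fix k assume k: "k \<in> {q..<n}" and e: "e = - (\<alpha> *\<^sub>R u k)"
        show ?thesis unfolding e
        proof (rule feas)
          show "norm (- (\<alpha> *\<^sub>R u k)) \<le> \<alpha>" using nu k apos by simp
          show "\<forall>j\<in>I. a j \<bullet> (x + - (\<alpha> *\<^sub>R u k)) \<le> b j"
            using auz k xb Im by (auto simp: inner_diff_right)
        qed
      qed
    qed
    have span: "bcone D (real n * C) v" if v: "x + v \<in> \<Omega>" "norm v \<le> \<alpha>" for v
    proof -
      have vexp: "v = (\<Sum>k<n. (u k \<bullet> v) *\<^sub>R u k)" using onb_expand[OF on[unfolded n_def], of v] unfolding n_def .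
      define w where "w = (\<Sum>k<q. (u k \<bullet> v) *\<^sub>R u k)"
      define z where "z = (\<Sum>k\<in>{q..<n}. (u k \<bullet> v) *\<^sub>R u k)"
      have vwz: "v = w + z" unfolding w_def z_def
        using vexp sum.atLeastLessThan_concat[of 0 q n "\<lambda>k. (u k \<bullet> v) *\<^sub>R u k"] qn
        by (simp add: atLeast0LessThan)
      have wspan: "w \<in> span (a ` I)" unfolding spu[symmetric] w_def
        by (intro span_sum span_scale) (simp add: span_base)
      have az: "a i \<bullet> z = 0" if "i \<in> I" for i
        unfolding z_def using auz[OF that] by (simp add: inner_sum_right)
      have aw: "a i \<bullet> w = a i \<bullet> v" if "i \<in> I" for i
        using az[OF that] vwz by (simp add: inner_add_right)
      have "w = - (\<Sum>i\<in>I. (a i \<bullet> w) *\<^sub>R dhat a I i)" by (rule span_repr[OF fI inj ind wspan])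
      also have "\<dots> = - (\<Sum>i\<in>I. (a i \<bullet> v) *\<^sub>R dhat a I i)"
        using aw by (intro arg_cong[where f=uminus] sum.cong) auto
      also have "\<dots> = (\<Sum>i\<in>I. (- (a i \<bullet> v)) *\<^sub>R dhat a I i)"
        by (simp add: sum_negf)
      finally have vdec: "v = (\<Sum>i\<in>I. (- (a i \<bullet> v)) *\<^sub>R dhat a I i) + z" using vwz by simp
      have c1: "bcone D C ((- (a i \<bullet> v)) *\<^sub>R dhat a I i)" if i: "i \<in> I" for i
      proof -
        define t where "t = a i \<bullet> v"
        have im: "i < m" using i Im by auto
        have ts: "t \<le> s i" using v(1) im unfolding t_def s_def \<Omega>_def Omega_def by (auto simp: inner_add_right)
        have "\<bar>t\<bar> \<le> norm (a i) * norm v" unfolding t_def by (rule Cauchy_Schwarz_ineq2)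
        also have "\<dots> \<le> norm (a i) * \<alpha>" using v(2) by (simp add: mult_left_mono)
        finally have tab: "\<bar>t\<bar> \<le> norm (a i) * \<alpha>" .
        have K: "norm (a i) * nd i \<le> C" using CK[OF Im i] unfolding nd_def .
        have ndp: "nd i > 0" using ndpos[OF i] .
        have dh: "dhat a I i = (nd i / \<alpha>) *\<^sub>R d i"
          unfolding d_eq scaleR_scaleR using ndp apos by simp
        show ?thesis
        proof (cases "t \<le> 0")
          case True
          have eq: "(- (a i \<bullet> v)) *\<^sub>R dhat a I i = (- t * nd i / \<alpha>) *\<^sub>R d i"
            unfolding dh scaleR_scaleR t_def by simp
          have "- t * nd i / \<alpha> \<le> norm (a i) * \<alpha> * nd i / \<alpha>"
            using True tab ndp apos by (intro divide_right_mono mult_right_mono) auto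
          also have "\<dots> = norm (a i) * nd i" using apos by simp
          finally have "- t * nd i / \<alpha> \<le> C" using K by linarith
          then show ?thesis unfolding eq
            by (intro bcone_single fD D1 i) (use True ndp apos in \<open>simp_all add: mult_nonpos_nonneg divide_nonpos_pos\<close>)
        next
          case False
          then have tpos: "t > 0" by simp
          have spos: "s i > 0" using ts tpos by linarith
          have t0pos: "t0 i > 0" unfolding t0_def using spos ndp apos by simp
          have eq: "(- (a i \<bullet> v)) *\<^sub>R dhat a I i = (t * nd i / (\<alpha> * t0 i)) *\<^sub>R (- (t0 i *\<^sub>R d i))"
            unfolding dh scaleR_scaleR t_def using t0pos apos by simp
          have cb: "t * nd i / (\<alpha> * t0 i) \<le> C"
          proof (cases "1 \<le> s i * nd i / \<alpha>")
            case True
            then have "t0 i = 1" unfolding t0_def by simp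
            then have "t * nd i / (\<alpha> * t0 i) = t * nd i / \<alpha>" by simp
            also have "\<dots> \<le> norm (a i) * \<alpha> * nd i / \<alpha>"
              using tab ndp apos by (intro divide_right_mono mult_right_mono) auto
            also have "\<dots> = norm (a i) * nd i" using apos by simp
            finally show ?thesis using K by linarith
          next
            case False
            then have "t0 i = s i * nd i / \<alpha>" unfolding t0_def by simp
            then have "t * nd i / (\<alpha> * t0 i) = t / s i" using ndp apos spos by (simp add: field_simps)
            also have "\<dots> \<le> 1" using ts spos by simp
            finally show ?thesis using C1 by linarith
          qed
          show ?thesis unfolding eq
            by (intro bcone_single fD D2 i cb) (use tpos ndp apos t0pos in simp)
        qed
      qed
      have c2: "bcone D 1 ((u k \<bullet> v) *\<^sub>R u k)" if k: "k \<in> {q..<n}" for k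
      proof -
        define g where "g = u k \<bullet> v"
        have "\<bar>g\<bar> \<le> norm (u k) * norm v" unfolding g_def by (rule Cauchy_Schwarz_ineq2)
        then have gab: "\<bar>g\<bar> \<le> \<alpha>" using nu[of k] k v(2) by simp
        show ?thesis
        proof (cases "g \<ge> 0")
          case True
          have eq: "(u k \<bullet> v) *\<^sub>R u k = (g / \<alpha>) *\<^sub>R (\<alpha> *\<^sub>R u k)" using apos by (simp add: g_def)
          show ?thesis unfolding eq
          proof (rule bcone_single[OF fD D3(1)[OF k]])
            show "0 \<le> g / \<alpha>" using True apos by simp
            have "g \<le> \<alpha>" using gab by linarith
            then show "g / \<alpha> \<le> 1" using apos by simp
          qed
        next
          case False
          have eq: "(u k \<bullet> v) *\<^sub>R u k = (- g / \<alpha>) *\<^sub>R (- (\<alpha> *\<^sub>R u k))" using apos by (simp add: g_def)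
          show ?thesis unfolding eq
          proof (rule bcone_single[OF fD D3(2)[OF k]])
            show "0 \<le> - g / \<alpha>" using False apos by (simp add: divide_nonpos_pos)
            have "- g \<le> \<alpha>" using gab by linarith
            then show "- g / \<alpha> \<le> 1" unfolding divide_le_eq_1_pos[OF apos] .
          qed
        qed
      qed
      have "bcone D ((\<Sum>i\<in>I. C) + (\<Sum>k\<in>{q..<n}. 1)) ((\<Sum>i\<in>I. (- (a i \<bullet> v)) *\<^sub>R dhat a I i) + z)"
        unfolding z_def
        by (intro bcone_add bcone_sum fI finite_atLeastLessThan c1 c2)
      then have "bcone D ((\<Sum>i\<in>I. C) + (\<Sum>k\<in>{q..<n}. 1)) v"
        by (subst vdec) assumption
      moreover have "(\<Sum>i\<in>I. C) + (\<Sum>k\<in>{q..<n}. (1::real)) \<le> real n * C"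
      proof -
        have "(\<Sum>i\<in>I. C) + (\<Sum>k\<in>{q..<n}. (1::real)) = real q * C + (real n - real q)"
          using qn by (simp add: q_def of_nat_diff)
        also have "\<dots> \<le> real q * C + (real n - real q) * C"
        proof -
          have "(real n - real q) * 1 \<le> (real n - real q) * C"
            using qn C1 by (intro mult_left_mono) auto
          then show ?thesis by simp
        qed
        also have "\<dots> = real n * C" by (simp add: algebra_simps)
        finally show ?thesis .
      qed
      ultimately show ?thesis by (rule bcone_mono)
    qed
    show "\<exists>\<Lambda>. \<Lambda> \<le> real CARD('n) * C \<and> pos_spanning_set (Omega a b m) x \<alpha> (Dset a b m x \<alpha> u) \<Lambda>"
    proof (rule exI[of _ "real n * C"], intro conjI)
      show "real n * C \<le> real CARD('n) * C" by (simp add: n_def)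
      show "pos_spanning_set (Omega a b m) x \<alpha> (Dset a b m x \<alpha> u) (real n * C)"
        unfolding pos_spanning_set_def D_def[symmetric] \<Omega>_def[symmetric]
      proof (intro conjI)
        show "finite D" by (rule fD)
        show "\<forall>e\<in>D. x + e \<in> \<Omega>" using inD by blast
        show "\<forall>v. x + v \<in> \<Omega> \<and> norm v \<le> \<alpha> \<longrightarrow> (\<exists>c. (\<forall>d\<in>D. 0 \<le> c d) \<and> v = (\<Sum>d\<in>D. c d *\<^sub>R d) \<and> (\<Sum>d\<in>D. c d) \<le> real n * C)"
        proof (intro allI impI)
        fix v assume "x + v \<in> \<Omega> \<and> norm v \<le> \<alpha>"
        then have "bcone D (real n * C) v" using span by blast
        then show "\<exists>c. (\<forall>d\<in>D. 0 \<le> c d) \<and> v = (\<Sum>d\<in>D. c d *\<^sub>R d) \<and> (\<Sum>d\<in>D. c d) \<le> real n * C"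
          unfolding bcone_def .
        qed
      qed
    qed
  qed
qed

end
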